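(* Let $m\ge0$ and let $f:\mathbb{R}^n\to\mathbb{R}$ be $m$-weakly convex and $M$-smooth. Let $\alpha>m$, $\lambda=\alpha-m$, $\eta\ge0$, $\epsilon\ge0$. If $x$ is an $(\eta,\epsilon)$-inexact stationary point of $f$, then $$\|\nabla f(x)\|\le\Big(1+\frac M\alpha\Big)\alpha\Big(\frac2\lambda\eta+\sqrt{\frac2\lambda\epsilon}\Big).$$ Consequently, for $\delta\ge0$, if $\epsilon\le\frac2\lambda\eta^2$ and $\eta\le\frac{\delta\lambda}{4(1+M/\alpha)\alpha}$, then $\|\nabla f(x)\|\le\delta$.
   Context: A function $f$ is $m$-weakly convex ($m\ge 0$) if $x\mapsto f(x)+\frac{m}{2}\|x\|^2$ is convex. For $\epsilon\ge 0$, $\partial_\epsilon f(x)=\{v\in\mathbb{R}^n: f(y)\ge f(x)+\langle v,y-x\rangle-\frac{m}{2}\|y-x\|^2-\epsilon\ \ \forall y\}$. A point $x$ is an $(\eta,\epsilon)$-inexact stationary point if $\mathrm{dist}(0,\partial_\epsilon f(x))\le\eta$. $M$-smooth means differentiable with $M$-Lipschitz gradient. *)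

theory Defs
  imports "HOL-Analysis.Analysis"
begin

definition weakly_convex :: "real \<Rightarrow> (real^'n \<Rightarrow> real) \<Rightarrow> bool" where
  "weakly_convex m f \<longleftrightarrow> m \<ge> 0 \<and> convex_on UNIV (\<lambda>x. f x + m / 2 * (norm x)^2)"

definition eps_subdiff :: "real \<Rightarrow> real \<Rightarrow> (real^'n \<Rightarrow> real) \<Rightarrow> real^'n \<Rightarrow> (real^'n) set" where
  "eps_subdiff m \<epsilon> f x = {v. \<forall>y. f y \<ge> f x + v \<bullet> (y - x) - m / 2 * (norm (y - x))^2 - \<epsilon>}"

definition inexact_stationary :: "real \<Rightarrow> real \<Rightarrow> real \<Rightarrow> (real^'n \<Rightarrow> real) \<Rightarrow> real^'n \<Rightarrow> bool" where
  "inexact_stationary m \<eta> \<epsilon> f x \<longleftrightarrow> eps_subdiff m \<epsilon> f x \<noteq> {} \<and> infdist 0 (eps_subdiff m \<epsilon> f x) \<le> \<eta>"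

definition grad :: "(real^'n \<Rightarrow> real) \<Rightarrow> real^'n \<Rightarrow> real^'n" where
  "grad f x = (SOME g. (f has_derivative (\<lambda>h. g \<bullet> h)) (at x))"

definition M_smooth :: "real \<Rightarrow> (real^'n \<Rightarrow> real) \<Rightarrow> bool" where
  "M_smooth M f \<longleftrightarrow> (\<forall>x. f differentiable (at x)) \<and>
     (\<forall>x y. norm (grad f x - grad f y) \<le> M * norm (x - y))"

end

theory Submission
  imports Defs
begin

lemma rep: fixes L :: "real^'n \<Rightarrow> real" assumes "linear L"
  shows "L = (\<lambda>h. (\<Sum>i\<in>Basis. L i *\<^sub>R i) \<bullet> h)"
proof
  fix h
  have "L h = L (\<Sum>i\<in>Basis. (h \<bullet> i) *\<^sub>R i)" by (simp add: euclidean_representation)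
  also have "\<dots> = (\<Sum>i\<in>Basis. (h \<bullet> i) * L i)" using assms by (simp add: linear_sum linear_scale)
  also have "\<dots> = (\<Sum>i\<in>Basis. L i *\<^sub>R i) \<bullet> h" by (simp add: inner_sum_left inner_commute[of h] mult.commute)
  finally show "L h = (\<Sum>i\<in>Basis. L i *\<^sub>R i) \<bullet> h" .
qed

lemma infd: fixes A :: "'a::metric_space set" assumes "A \<noteq> {}" "infdist x A < e"
  shows "\<exists>a\<in>A. dist x a < e"
  using assms by (simp add: infdist_notempty cINF_less_iff)

lemma grad_deriv:
  fixes f :: "real^'n \<Rightarrow> real"
  assumes "f differentiable (at z)"
  shows "(f has_derivative (\<lambda>h. grad f z \<bullet> h)) (at z)"
proof -
  obtain L where L: "(f has_derivative L) (at z)" using assms by (auto simp: differentiable_def)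
  then have "linear L" using has_derivative_linear by blast
  then have "\<exists>g. (f has_derivative (\<lambda>h. g \<bullet> h)) (at z)" using L rep[of L] by metis
  then show ?thesis unfolding grad_def by (rule someI_ex)
qed

lemma descent:
  fixes f :: "real^'n \<Rightarrow> real"
  assumes sm: "M_smooth M f" and M0: "M \<ge> 0"
  shows "f (x + d) \<le> f x + grad f x \<bullet> d + M * (norm d)^2"
proof -
  have diff: "\<And>z. f differentiable (at z)" using sm by (simp add: M_smooth_def)
  define \<phi> where "\<phi> s = f (x + s *\<^sub>R d) - s * (grad f x \<bullet> d)" for s
  have D: "(\<phi> has_real_derivative (grad f (x + s *\<^sub>R d) \<bullet> d - grad f x \<bullet> d)) (at s)" for s
  proof -
    have a: "((\<lambda>s. x + s *\<^sub>R d) has_derivative (\<lambda>h. h *\<^sub>R d)) (at s)"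
      by (auto intro!: derivative_eq_intros)
    have "(((\<lambda>y. f y) \<circ> (\<lambda>s. x + s *\<^sub>R d)) has_derivative ((\<lambda>h. grad f (x + s *\<^sub>R d) \<bullet> h) \<circ> (\<lambda>h. h *\<^sub>R d))) (at s)"
      by (rule diff_chain_at[OF a grad_deriv[OF diff]])
    moreover have "((\<lambda>h. grad f (x + s *\<^sub>R d) \<bullet> h) \<circ> (\<lambda>h. h *\<^sub>R d)) = (*) (grad f (x + s *\<^sub>R d) \<bullet> d)"
      by (auto simp: o_def mult.commute)
    ultimately have "((\<lambda>s. f (x + s *\<^sub>R d)) has_real_derivative (grad f (x + s *\<^sub>R d) \<bullet> d)) (at s)"
      by (simp add: has_field_derivative_def o_def)
    then show ?thesis unfolding \<phi>_def
      by (auto intro!: derivative_eq_intros)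
  qed
  have cont: "continuous_on {0..1} \<phi>"
    using D by (meson DERIV_continuous continuous_at_imp_continuous_on)
  obtain l z where z: "0 < z" "z < 1" and lz: "(\<phi> has_real_derivative l) (at z)"
    and eq: "\<phi> 1 - \<phi> 0 = (1 - 0) * l"
    using MVT[of 0 1 \<phi>] cont D real_differentiable_def by force
  have "l = grad f (x + z *\<^sub>R d) \<bullet> d - grad f x \<bullet> d" using DERIV_unique[OF lz D] .
  also have "\<dots> = (grad f (x + z *\<^sub>R d) - grad f x) \<bullet> d" by (simp add: inner_diff_left)
  also have "\<dots> \<le> norm (grad f (x + z *\<^sub>R d) - grad f x) * norm d" by (rule norm_cauchy_schwarz)
  also have "\<dots> \<le> M * norm ((x + z *\<^sub>R d) - x) * norm d"
  proof (rule mult_right_mono)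
    show "norm (grad f (x + z *\<^sub>R d) - grad f x) \<le> M * norm ((x + z *\<^sub>R d) - x)"
      using sm unfolding M_smooth_def by blast
  qed simp
  also have "\<dots> = M * z * (norm d)^2" using z by (simp add: power2_eq_square)
  also have "\<dots> \<le> M * (norm d)^2" using z M0 by (simp add: mult_right_mono mult_left_le)
  finally have "l \<le> M * (norm d)^2" .
  then show ?thesis using eq unfolding \<phi>_def by simp
qed

theorem mainTheorem13:
  fixes f :: "real^'n \<Rightarrow> real" and x :: "real^'n"
    and m M \<alpha> lam \<eta> \<epsilon> :: real
  assumes "m \<ge> 0"
    and "weakly_convex m f"
    and "M_smooth M f"
    and "\<alpha> > m"
    and "lam = \<alpha> - m"
    and "\<eta> \<ge> 0" and "\<epsilon> \<ge> 0"
    and "inexact_stationary m \<eta> \<epsilon> f x"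
  shows "norm (grad f x) \<le> (1 + M / \<alpha>) * \<alpha> * (2 / lam * \<eta> + sqrt (2 / lam * \<epsilon>))
    \<and> (\<forall>\<delta>::real. \<delta> \<ge> 0 \<longrightarrow> \<epsilon> \<le> 2 / lam * \<eta>^2 \<longrightarrow>
           \<eta> \<le> \<delta> * lam / (4 * (1 + M / \<alpha>) * \<alpha>) \<longrightarrow> norm (grad f x) \<le> \<delta>)"
proof -
  note sm = assms(3)
  define g where "g = grad f x"
  define L where "L = \<alpha> + M"
  define s where "s = sqrt (2 / lam * \<epsilon>)"
  obtain b :: "real^'n" where b: "b \<in> Basis" using nonempty_Basis by blast
  have "norm (grad f x - grad f (x + b)) \<le> M * norm (x - (x + b))"
    using sm unfolding M_smooth_def by blast
  moreover have "norm (x - (x + b)) = 1" using b by (simp add: norm_Basis)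
  ultimately have M0: "M \<ge> 0" by (metis mult.right_neutral norm_ge_zero order_trans)
  have lam0: "lam > 0" using assms by simp
  have a0: "\<alpha> > 0" using assms by simp
  have L0: "L > 0" and lamL: "lam \<le> L" using assms M0 by (auto simp: L_def)
  have LL: "(1 + M / \<alpha>) * \<alpha> = L" using a0 by (simp add: L_def field_simps)
  have key: "(2*M + m) * lam \<le> L^2"
  proof -
    have "L^2 - (2*M+m)*lam = \<alpha> * (\<alpha> - m) + (M + m)^2"
      unfolding assms(5) L_def by (simp add: power2_eq_square algebra_simps)
    moreover have "\<alpha> * (\<alpha> - m) \<ge> 0" using assms by simp
    moreover have "(M + m)^2 \<ge> 0" by simp
    ultimately show ?thesis by linarith
  qed
  have ubound: "norm (v - g) \<le> L * s" if v: "v \<in> eps_subdiff m \<epsilon> f x" for v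
  proof -
    define u where "u = v - g"
    define t where "t = lam / L^2"
    define N where "N = (norm u)^2"
    have t0: "t > 0" using lam0 L0 by (simp add: t_def)
    define d where "d = t *\<^sub>R u"
    have s1: "f (x + d) \<ge> f x + v \<bullet> d - m / 2 * (norm d)^2 - \<epsilon>"
      using v by (auto simp: eps_subdiff_def elim!: allE[of _ "x + d"])
    have s2: "f (x + d) \<le> f x + g \<bullet> d + M * (norm d)^2"
      using descent[OF sm M0] by (simp add: g_def)
    have ud: "u \<bullet> d \<le> (M + m/2) * (norm d)^2 + \<epsilon>"
      using s1 s2 by (simp add: u_def inner_diff_left algebra_simps)
    have i1: "t * N \<le> (M + m/2) * t^2 * N + \<epsilon>"
    proof -
      have "u \<bullet> d = t * N" by (simp add: d_def N_def power2_norm_eq_inner)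
      moreover have "(norm d)^2 = t^2 * N" using t0 by (simp add: d_def N_def power_mult_distrib)
      ultimately show ?thesis using ud by (simp add: mult.assoc)
    qed
    have "(M + m/2) * t = (2*M+m) * lam / (2 * L^2)" by (simp add: t_def field_simps)
    also have "\<dots> \<le> 1/2" using key L0 by (simp add: divide_simps)
    finally have h: "(M + m/2) * t \<le> 1/2" .
    have N0: "N \<ge> 0" by (simp add: N_def)
    have "(M + m/2) * t^2 * N = ((M + m/2) * t) * (t * N)" by (simp add: power2_eq_square)
    also have "\<dots> \<le> 1/2 * (t * N)" using h t0 N0 by (intro mult_right_mono) auto
    finally have "t * N / 2 \<le> \<epsilon>" using i1 by simp
    then have "N \<le> 2 * \<epsilon> / t" using t0 by (simp add: field_simps)
    also have "\<dots> = L^2 * (2 / lam * \<epsilon>)" using lam0 L0 by (simp add: t_def field_simps)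
    finally have "N \<le> L^2 * (2 / lam * \<epsilon>)" .
    then have "sqrt N \<le> sqrt (L^2 * (2 / lam * \<epsilon>))" by (rule real_sqrt_le_mono)
    also have "sqrt (L^2 * (2 / lam * \<epsilon>)) = L * s"
      unfolding real_sqrt_mult s_def using L0 by simp
    finally show ?thesis by (simp add: N_def u_def)
  qed
  have S: "eps_subdiff m \<epsilon> f x \<noteq> {}" "infdist 0 (eps_subdiff m \<epsilon> f x) \<le> \<eta>"
    using assms(8) by (auto simp: inexact_stationary_def)
  have gb: "norm g \<le> \<eta> + L * s"
  proof (rule field_le_epsilon)
    fix e :: real assume e: "e > 0"
    then obtain v where v: "v \<in> eps_subdiff m \<epsilon> f x" "dist 0 v < \<eta> + e"
      using infd[OF S(1), of 0 "\<eta> + e"] S(2) e by fastforce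
    have "norm g \<le> norm v + norm (v - g)" using norm_triangle_ineq4[of v "v - g"] by simp
    then show "norm g \<le> \<eta> + L * s + e" using ubound[OF v(1)] v(2) by simp
  qed
  have s0: "s \<ge> 0" using assms lam0 by (simp add: s_def)
  have "\<eta> \<le> L * (2 / lam * \<eta>)"
  proof -
    have "L * (2 / lam) \<ge> 1" using lamL lam0 by (simp add: field_simps)
    then have "1 * \<eta> \<le> (L * (2 / lam)) * \<eta>" using assms(6) by (intro mult_right_mono) auto
    then show ?thesis by (simp add: mult.assoc)
  qed
  then have part1: "norm g \<le> L * (2 / lam * \<eta> + s)" using gb by (simp add: distrib_left)
  have part2: "norm g \<le> \<delta>" if d0: "\<delta> \<ge> 0" and he: "\<epsilon> \<le> 2 / lam * \<eta>^2"
     and hd: "\<eta> \<le> \<delta> * lam / (4 * L)" for \<delta>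
  proof -
    have "2 / lam * \<epsilon> \<le> (2 / lam * \<eta>)^2"
      using he lam0 by (simp add: power2_eq_square field_simps)
    then have "sqrt (2 / lam * \<epsilon>) \<le> sqrt ((2 / lam * \<eta>)^2)" by (rule real_sqrt_le_mono)
    then have "s \<le> 2 / lam * \<eta>" unfolding s_def using assms(6) lam0 by simp
    then have "norm g \<le> L * (4 / lam * \<eta>)" proof -
      have "L * (2 / lam * \<eta> + s) \<le> L * (2 / lam * \<eta> + 2 / lam * \<eta>)"
        using \<open>s \<le> 2 / lam * \<eta>\<close> L0 by (intro mult_left_mono) auto
      then show ?thesis using part1 by simp
    qed
    also have "\<dots> \<le> \<delta>" using hd L0 lam0 by (simp add: field_simps)
    finally show ?thesis .
  qed
  have LL4: "4 * (1 + M / \<alpha>) * \<alpha> = 4 * L" using LL by (metis mult.assoc)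
  show ?thesis unfolding LL LL4 using part1 part2 by (simp add: g_def s_def)
qed

end
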